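(* Let $n\ge3$, $2\le i\le n-1$, $\mathfrak g=\mathfrak{sp}(n,\mathbb C)$, $\mathfrak q$ of type $C_n(i)$, $\mu=\varepsilon_1+\varepsilon_{i+1}$, $\epsilon_\gamma=\varepsilon_2-\varepsilon_{i+1}$, and set $Y^*_l:=\frac{8c_0^2}{i+1}\mathrm{pr}_{\mathfrak l_\gamma\otimes\mathfrak z(\bar{\mathfrak n})}(\bar\tau_2(X_{-\mu}+X_{-\epsilon_\gamma}))$. Then $$Y^*_l=\frac{4c_0}{i+1}X_{\varepsilon_1-\varepsilon_2}\otimes X_{-2\varepsilon_1}-\frac{4c_0}{i+1}X_{-(\varepsilon_1-\varepsilon_2)}\otimes X_{-2\varepsilon_2}+\frac{2c_0}{i+1}\sum_{k=3}^iX_{-(\varepsilon_2-\varepsilon_k)}\otimes X_{-(\varepsilon_1+\varepsilon_k)}$$ $$-\frac{2c_0}{i+1}\sum_{k=3}^iX_{-(\varepsilon_1-\varepsilon_k)}\otimes X_{-(\varepsilon_2+\varepsilon_k)}-\frac{2c_0}{i+1}H_{\varepsilon_1-\varepsilon_2}\otimes X_{-(\varepsilon_1+\varepsilon_2)}.$$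
   Context: $\mathfrak g=\mathfrak{sp}(n,\mathbb C)\subset\mathfrak{gl}(2n,\mathbb C)$; $\hat j=j+n$, $E_{ab}$ matrix units. Cartan $\mathfrak h$ = matrices $\sum_jh_j(E_{jj}-E_{\hat j\hat j})$, $\varepsilon_j$ picks $h_j$. Roots $\pm\varepsilon_j\pm\varepsilon_k$ ($j<k$), $\pm2\varepsilon_j$; simple roots $\alpha_j=\varepsilon_j-\varepsilon_{j+1}$ ($j<n$), $\alpha_n=2\varepsilon_n$. Root vectors: $X_{\varepsilon_j-\varepsilon_k}=E_{jk}-E_{\hat k\hat j}$ for $j\neq k$ (so $X_{-(\varepsilon_j-\varepsilon_k)}=X_{\varepsilon_k-\varepsilon_j}$), $X_{\varepsilon_j+\varepsilon_k}=E_{j\hat k}+E_{k\hat j}$, $X_{-(\varepsilon_j+\varepsilon_k)}=E_{\hat jk}+E_{\hat kj}$, $X_{2\varepsilon_j}=E_{j\hat j}$, $X_{-2\varepsilon_j}=E_{\hat jj}$; $H_\alpha=[X_\alpha,X_{-\alpha}]$, so $H_{\varepsilon_1-\varepsilon_2}=(E_{11}-E_{\hat1\hat1})-(E_{22}-E_{\hat2\hat2})$. The Killing form is $\kappa=c_0\mathrm{Tr}(XY)$, $c_0>0$ constant. $\mathfrak q=\mathfrak l\oplus\mathfrak n$ is the standard maximal parabolic subalgebra determined by $\alpha_i$; grading $\mathfrak g=\bigoplus_{j=-2}^2\mathfrak g(j)$ by the $\alpha_i$-coefficient, $\mathfrak l=\mathfrak g(0)$, $\mathfrak z(\bar{\mathfrak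 n})=\mathfrak g(-2)$ (roots $-(\varepsilon_j+\varepsilon_k)$, $j<k\le i$, and $-2\varepsilon_j$, $j\le i$), $\mathfrak g(-1)$ has roots $-(\varepsilon_j\pm\varepsilon_k)$, $j\le i<k$. $\mathfrak l=\mathfrak z(\mathfrak l)\oplus\mathfrak l_\gamma\oplus\mathfrak l_{n\gamma}$ with $\mathfrak l_\gamma\cong\mathfrak{sl}(i,\mathbb C)$ (simple roots $\alpha_1,\dots,\alpha_{i-1}$), $\mathfrak l_{n\gamma}\cong\mathfrak{sp}(n-i,\mathbb C)$ (simple roots $\alpha_{i+1},\dots,\alpha_n$), $\mathfrak z(\mathfrak l)$ the center; $\mathrm{pr}_{\mathfrak l_\gamma\otimes\mathfrak z(\bar{\mathfrak n})}$ is the projection along this decomposition. $\bar\omega=\frac1{c_0}\sum_{j=1}^iX_{2\varepsilon_j}\otimes X_{-2\varepsilon_j}+\frac1{2c_0}\sum_{1\le j<k\le i}X_{\varepsilon_j+\varepsilon_k}\otimes X_{-(\varepsilon_j+\varepsilon_k)}$, $\bar\tau_2(Y)=\tfrac12(\mathrm{ad}(Y)^2\otimes\mathrm{Id})\bar\omega$ for $Y\in\mathfrak g(-1)$. *)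

theory Defs
  imports Complex_Main
begin

text \<open>Matrices in gl(2n,C) are functions nat => nat => complex with
  row/column indices in {1..2n} (entries outside are 0 for all objects used).
  An element of gl(2n) (x) gl(2n) (hence of g (x) g) is a 4-index array T, where
  T a b c d is the coefficient of E_ab (x) E_cd.\<close>

type_synonym cmat = "nat \<Rightarrow> nat \<Rightarrow> complex"
type_synonym ctens = "nat \<Rightarrow> nat \<Rightarrow> nat \<Rightarrow> nat \<Rightarrow> complex"

definition Emat :: "nat \<Rightarrow> nat \<Rightarrow> cmat" where
  "Emat a b = (\<lambda>r s. if r = a \<and> s = b then 1 else 0)"

definition hat :: "nat \<Rightarrow> nat \<Rightarrow> nat" where
  "hat n j = j + n"

definition mmul :: "nat \<Rightarrow> cmat \<Rightarrow> cmat \<Rightarrow> cmat" where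
  "mmul n X Y = (\<lambda>r s. \<Sum>t\<in>{1..2*n}. X r t * Y t s)"

definition bracket :: "nat \<Rightarrow> cmat \<Rightarrow> cmat \<Rightarrow> cmat" where
  "bracket n X Y = (\<lambda>r s. mmul n X Y r s - mmul n Y X r s)"

definition Xdiff :: "nat \<Rightarrow> nat \<Rightarrow> nat \<Rightarrow> cmat" where
  "Xdiff n j k = (\<lambda>r s. Emat j k r s - Emat (hat n k) (hat n j) r s)"

definition Xsum :: "nat \<Rightarrow> nat \<Rightarrow> nat \<Rightarrow> cmat" where
  "Xsum n j k = (\<lambda>r s. Emat j (hat n k) r s + Emat k (hat n j) r s)"

definition Xnegsum :: "nat \<Rightarrow> nat \<Rightarrow> nat \<Rightarrow> cmat" where
  "Xnegsum n j k = (\<lambda>r s. Emat (hat n j) k r s + Emat (hat n k) j r s)"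

definition Xtwo :: "nat \<Rightarrow> nat \<Rightarrow> cmat" where
  "Xtwo n j = Emat j (hat n j)"

definition Xnegtwo :: "nat \<Rightarrow> nat \<Rightarrow> cmat" where
  "Xnegtwo n j = Emat (hat n j) j"

definition Hdiag :: "nat \<Rightarrow> nat \<Rightarrow> cmat" where
  "Hdiag n j = (\<lambda>r s. Emat j j r s - Emat (hat n j) (hat n j) r s)"

text \<open>H_alpha = [X_alpha, X_{-alpha}]; for alpha = eps_1 - eps_2, X_{-alpha} = X_{eps_2 - eps_1}.\<close>
definition H12 :: "nat \<Rightarrow> cmat" where
  "H12 n = bracket n (Xdiff n 1 2) (Xdiff n 2 1)"

definition tens :: "cmat \<Rightarrow> cmat \<Rightarrow> ctens" where
  "tens X Y = (\<lambda>a b c d. X a b * Y c d)"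

text \<open>omega-bar, with Killing form constant c0.\<close>
definition omega_bar :: "nat \<Rightarrow> nat \<Rightarrow> real \<Rightarrow> ctens" where
  "omega_bar n i c0 = (\<lambda>a b c d.
      (1 / complex_of_real c0) * (\<Sum>j\<in>{1..i}. tens (Xtwo n j) (Xnegtwo n j) a b c d)
    + (1 / (2 * complex_of_real c0)) *
        (\<Sum>j\<in>{1..i}. \<Sum>k\<in>{j+1..i}. tens (Xsum n j k) (Xnegsum n j k) a b c d))"

definition ad_first :: "nat \<Rightarrow> cmat \<Rightarrow> ctens \<Rightarrow> ctens" where
  "ad_first n Y T = (\<lambda>a b c d. (\<Sum>e\<in>{1..2*n}. Y a e * T e b c d) - (\<Sum>e\<in>{1..2*n}. T a e c d * Y e b))"

definition tau2_bar :: "nat \<Rightarrow> nat \<Rightarrow> real \<Rightarrow> cmat \<Rightarrow> ctens" where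
  "tau2_bar n i c0 Y = (\<lambda>a b c d. (1/2) * ad_first n Y (ad_first n Y (omega_bar n i c0)) a b c d)"

text \<open>Projection of g onto l_gamma = sl(i) along the decomposition
  g = h (+) root spaces, h = (h cap l_gamma) (+) z(l) (+) (h cap l_ngamma):
  the component along X_{eps_j - eps_k} (j,k <= i, j ~= k) is the (j,k) entry, and the
  Cartan component is the traceless part of (h_1,...,h_i) (the mean being the z(l) part).\<close>
definition pr_lgamma :: "nat \<Rightarrow> nat \<Rightarrow> cmat \<Rightarrow> cmat" where
  "pr_lgamma n i X = (\<lambda>r s.
      (\<Sum>j\<in>{1..i}. \<Sum>k\<in>{1..i}. if j \<noteq> k then X j k * Xdiff n j k r s else 0)
    + (\<Sum>j\<in>{1..i}. (X j j - (\<Sum>l\<in>{1..i}. X l l) / of_nat i) * Hdiag n j r s))"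

definition pr_zn :: "nat \<Rightarrow> nat \<Rightarrow> cmat \<Rightarrow> cmat" where
  "pr_zn n i X = (\<lambda>r s. \<Sum>j\<in>{1..i}. \<Sum>k\<in>{1..i}. X (hat n j) k * Emat (hat n j) k r s)"

definition pr_tens :: "nat \<Rightarrow> nat \<Rightarrow> ctens \<Rightarrow> ctens" where
  "pr_tens n i T = (\<lambda>a b c d. \<Sum>p\<in>{1..2*n}. \<Sum>q\<in>{1..2*n}. \<Sum>r\<in>{1..2*n}. \<Sum>s\<in>{1..2*n}.
      T p q r s * pr_lgamma n i (Emat p q) a b * pr_zn n i (Emat r s) c d)"

end

theory Submission
  imports Defs
begin

lemma sumE_l: "(\<Sum>t\<in>{1..m}. Emat x y r t * f t) = (if r = x \<and> y \<in> {1..m} then f y else 0)"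
proof (cases "r = x")
  case True
  have "(\<Sum>t\<in>{1..m}. Emat x y r t * f t) = (\<Sum>t\<in>{1..m}. if t = y then f y else 0)"
    by (rule sum.cong) (auto simp: Emat_def True)
  then show ?thesis using True by (simp add: sum.delta')
qed (simp add: Emat_def)

lemma sumE_r: "(\<Sum>t\<in>{1..m}. f t * Emat x y t s) = (if s = y \<and> x \<in> {1..m} then f x else 0)"
proof (cases "s = y")
  case True
  have "(\<Sum>t\<in>{1..m}. f t * Emat x y t s) = (\<Sum>t\<in>{1..m}. if t = x then f x else 0)"
    by (rule sum.cong) (auto simp: Emat_def True)
  then show ?thesis using True by (simp add: sum.delta')
qed (simp add: Emat_def)

lemma ad_Y:
  assumes "i + 1 \<le> n" "1 \<le> i"
  shows "ad_first n (\<lambda>r s. Xnegsum n 1 (i+1) r s + Xdiff n (i+1) 2 r s) T a b c d =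
     (if a = n+1 then T (i+1) b c d else 0) + (if a = i+1+n then T 1 b c d else 0)
   + (if a = i+1 then T 2 b c d else 0) - (if a = 2+n then T (i+1+n) b c d else 0)
   - ((if b = i+1 then T a (1+n) c d else 0) + (if b = 1 then T a (i+1+n) c d else 0)
   + (if b = 2 then T a (i+1) c d else 0) - (if b = i+1+n then T a (2+n) c d else 0))"
proof -
  have e: "(\<Sum>e\<in>{1..2*n}. (Emat (n+1) (i+1) a e + Emat (i+1+n) 1 a e + (Emat (i+1) 2 a e - Emat (2+n) (i+1+n) a e)) * T e b c d)
    = (if a = n+1 then T (i+1) b c d else 0) + (if a = i+1+n then T 1 b c d else 0)
   + (if a = i+1 then T 2 b c d else 0) - (if a = 2+n then T (i+1+n) b c d else 0)"
    by (simp only: distrib_right left_diff_distrib sum.distrib sum_subtractf sumE_l) (use assms in simp)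
  have f: "(\<Sum>e\<in>{1..2*n}. T a e c d * (Emat (n+1) (i+1) e b + Emat (i+1+n) 1 e b + (Emat (i+1) 2 e b - Emat (2+n) (i+1+n) e b)))
    = (if b = i+1 then T a (1+n) c d else 0) + (if b = 1 then T a (i+1+n) c d else 0)
   + (if b = 2 then T a (i+1) c d else 0) - (if b = i+1+n then T a (2+n) c d else 0)"
    by (simp only: distrib_left right_diff_distrib sum.distrib sum_subtractf sumE_r) (use assms in simp)
  show ?thesis unfolding ad_first_def Xnegsum_def Xdiff_def hat_def
    using e f by (simp add: add.commute)
qed


lemma ad2:
  assumes "i + 1 \<le> n" "1 \<le> i" "p \<le> i" "q \<le> i"
  shows "ad_first n (\<lambda>r s. Xnegsum n 1 (i+1) r s + Xdiff n (i+1) 2 r s)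
           (ad_first n (\<lambda>r s. Xnegsum n 1 (i+1) r s + Xdiff n (i+1) 2 r s) T) p q c d
        = (if q = 2 then T p (1+n) c d else 0) - (if q = 1 then T p (2+n) c d else 0)"
  by (simp only: ad_Y[OF assms(1,2)]) (use assms in simp)

lemma omega_val:
  assumes "1 \<le> p" "p \<le> i" "1 \<le> k" "k \<le> i"
  shows "omega_bar n i c0 p (k+n) c d =
     (if p = k then Xnegtwo n p c d / complex_of_real c0 else 0)
   + (if p < k then Xnegsum n p k c d / (2 * complex_of_real c0) else 0)
   + (if k < p then Xnegsum n k p c d / (2 * complex_of_real c0) else 0)"
proof -
  have s1: "(\<Sum>j\<in>{1..i}. tens (Xtwo n j) (Xnegtwo n j) p (k+n) c d)
      = (\<Sum>j\<in>{1..i}. if j = p then (if p = k then Xnegtwo n p c d else 0) else 0)"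
    by (rule sum.cong) (auto simp: tens_def Xtwo_def Emat_def hat_def)
  have s1': "(\<Sum>j\<in>{1..i}. tens (Xtwo n j) (Xnegtwo n j) p (k+n) c d)
      = (if p = k then Xnegtwo n p c d else 0)"
    unfolding s1 using assms by (simp add: sum.delta')
  have inner: "(\<Sum>k'\<in>{j+1..i}. tens (Xsum n j k') (Xnegsum n j k') p (k+n) c d)
     = (if j = p \<and> p < k then Xnegsum n p k c d else 0) + (if j = k \<and> k < p then Xnegsum n k p c d else 0)"
    if "j \<in> {1..i}" for j
  proof -
    have "(\<Sum>k'\<in>{j+1..i}. tens (Xsum n j k') (Xnegsum n j k') p (k+n) c d)
      = (\<Sum>k'\<in>{j+1..i}. (if k' = k then (if j = p then Xnegsum n p k c d else 0) else 0)
                         + (if k' = p then (if j = k then Xnegsum n k p c d else 0) else 0))"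
      by (rule sum.cong) (auto simp: tens_def Xsum_def Emat_def hat_def)
    also have "\<dots> = (if j = p \<and> p < k then Xnegsum n p k c d else 0) + (if j = k \<and> k < p then Xnegsum n k p c d else 0)"
      using assms by (simp add: sum.distrib sum.delta')
    finally show ?thesis .
  qed
  have s2: "(\<Sum>j\<in>{1..i}. \<Sum>k'\<in>{j+1..i}. tens (Xsum n j k') (Xnegsum n j k') p (k+n) c d)
     = (if p < k then Xnegsum n p k c d else 0) + (if k < p then Xnegsum n k p c d else 0)"
  proof -
    have "(\<Sum>j\<in>{1..i}. \<Sum>k'\<in>{j+1..i}. tens (Xsum n j k') (Xnegsum n j k') p (k+n) c d)
      = (\<Sum>j\<in>{1..i}. (if j = p then (if p < k then Xnegsum n p k c d else 0) else 0)
                     + (if j = k then (if k < p then Xnegsum n k p c d else 0) else 0))"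
      by (rule sum.cong[OF refl], subst inner, auto)
    also have "\<dots> = (if p < k then Xnegsum n p k c d else 0) + (if k < p then Xnegsum n k p c d else 0)"
      using assms by (simp add: sum.distrib sum.delta')
    finally show ?thesis .
  qed
  show ?thesis unfolding omega_bar_def using s1' s2 by simp
qed


lemma prz_E:
  "pr_zn n i (Emat r s) c d = (if r \<in> {n+1..n+i} \<and> s \<in> {1..i} \<and> c = r \<and> d = s then 1 else 0)"
proof -
  have inner: "(\<Sum>k\<in>{1..i}. Emat r s (j+n) k * Emat (j+n) k c d)
     = (if r = j + n \<and> s \<in> {1..i} \<and> c = r \<and> d = s then 1 else 0)" for j
  proof -
    have "(\<Sum>k\<in>{1..i}. Emat r s (j+n) k * Emat (j+n) k c d)
       = (\<Sum>k\<in>{1..i}. if k = s then (if r = j + n \<and> c = r \<and> d = s then 1 else 0) else 0)"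
      by (rule sum.cong) (auto simp: Emat_def)
    then show ?thesis by (simp add: sum.delta')
  qed
  have "pr_zn n i (Emat r s) c d = (\<Sum>j\<in>{1..i}. if j = r - n then (if n < r \<and> s \<in> {1..i} \<and> c = r \<and> d = s then 1 else 0) else 0)"
    unfolding pr_zn_def hat_def
    by (rule sum.cong[OF refl], subst inner, auto)
  also have "\<dots> = (if r \<in> {n+1..n+i} \<and> s \<in> {1..i} \<and> c = r \<and> d = s then 1 else 0)"
    by (simp add: sum.delta') auto
  finally show ?thesis .
qed

lemma prl_E:
  "pr_lgamma n i (Emat p q) a b = (if p \<in> {1..i} \<and> q \<in> {1..i} then
      (if p \<noteq> q then Xdiff n p q a b else Hdiag n p a b - (\<Sum>l\<in>{1..i}. Hdiag n l a b) / of_nat i) else 0)"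
proof -
  have inner: "(\<Sum>k\<in>{1..i}. if j \<noteq> k then Emat p q j k * Xdiff n j k a b else 0)
     = (if j = p then (if q \<in> {1..i} \<and> p \<noteq> q then Xdiff n p q a b else 0) else 0)" for j
  proof -
    have "(\<Sum>k\<in>{1..i}. if j \<noteq> k then Emat p q j k * Xdiff n j k a b else 0)
       = (\<Sum>k\<in>{1..i}. if k = q then (if j = p \<and> p \<noteq> q then Xdiff n p q a b else 0) else 0)"
      by (rule sum.cong) (auto simp: Emat_def)
    then show ?thesis by (simp add: sum.delta')
  qed
  have A: "(\<Sum>j\<in>{1..i}. \<Sum>k\<in>{1..i}. if j \<noteq> k then Emat p q j k * Xdiff n j k a b else 0)
     = (if p \<in> {1..i} \<and> q \<in> {1..i} \<and> p \<noteq> q then Xdiff n p q a b else 0)"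
    by (simp only: inner) (simp add: sum.delta')
  have tr: "(\<Sum>l\<in>{1..i}. Emat p q l l) = (if p = q \<and> p \<in> {1..i} then 1 else 0)"
  proof -
    have "(\<Sum>l\<in>{1..i}. Emat p q l l) = (\<Sum>l\<in>{1..i}. if l = p then (if p = q then 1 else 0) else 0)"
      by (rule sum.cong) (auto simp: Emat_def)
    then show ?thesis by (simp add: sum.delta')
  qed
  have B1: "(\<Sum>j\<in>{1..i}. Emat p q j j * Hdiag n j a b) = (if p = q \<and> p \<in> {1..i} then Hdiag n p a b else 0)"
  proof -
    have "(\<Sum>j\<in>{1..i}. Emat p q j j * Hdiag n j a b) = (\<Sum>j\<in>{1..i}. if j = p then (if p = q then Hdiag n p a b else 0) else 0)"
      by (rule sum.cong) (auto simp: Emat_def)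
    then show ?thesis by (simp add: sum.delta')
  qed
  have B: "(\<Sum>j\<in>{1..i}. (Emat p q j j - (\<Sum>l\<in>{1..i}. Emat p q l l) / of_nat i) * Hdiag n j a b)
     = (if p = q \<and> p \<in> {1..i} then Hdiag n p a b - (\<Sum>l\<in>{1..i}. Hdiag n l a b) / of_nat i else 0)"
  proof -
    have "(\<Sum>j\<in>{1..i}. (Emat p q j j - (\<Sum>l\<in>{1..i}. Emat p q l l) / of_nat i) * Hdiag n j a b)
      = (\<Sum>j\<in>{1..i}. Emat p q j j * Hdiag n j a b) - ((\<Sum>l\<in>{1..i}. Emat p q l l) / of_nat i) * (\<Sum>j\<in>{1..i}. Hdiag n j a b)"
      by (simp only: left_diff_distrib sum_subtractf sum_distrib_left)
    then show ?thesis by (simp only: B1 tr) simp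
  qed
  show ?thesis unfolding pr_lgamma_def A B by auto
qed

lemma prtens_collapse:
  assumes "i \<le> n"
  shows "pr_tens n i T a b c d = (if c \<in> {n+1..n+i} \<and> d \<in> {1..i} then
     (\<Sum>p\<in>{1..i}. \<Sum>q\<in>{1..i}. T p q c d * pr_lgamma n i (Emat p q) a b) else 0)"
proof -
  have inner: "(\<Sum>r\<in>{1..2*n}. \<Sum>s\<in>{1..2*n}. T p q r s * pr_lgamma n i (Emat p q) a b * pr_zn n i (Emat r s) c d)
     = (if c \<in> {n+1..n+i} \<and> d \<in> {1..i} then T p q c d * pr_lgamma n i (Emat p q) a b else 0)" for p q
  proof -
    have in2: "(\<Sum>s\<in>{1..2*n}. T p q r s * pr_lgamma n i (Emat p q) a b * pr_zn n i (Emat r s) c d)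
       = (if r = c then (if c \<in> {n+1..n+i} \<and> d \<in> {1..i} then T p q c d * pr_lgamma n i (Emat p q) a b else 0) else 0)" for r
    proof -
      have "(\<Sum>s\<in>{1..2*n}. T p q r s * pr_lgamma n i (Emat p q) a b * pr_zn n i (Emat r s) c d)
        = (\<Sum>s\<in>{1..2*n}. if s = d then (if r = c \<and> c \<in> {n+1..n+i} \<and> d \<in> {1..i} then T p q c d * pr_lgamma n i (Emat p q) a b else 0) else 0)"
        by (rule sum.cong) (auto simp: prz_E)
      also have "\<dots> = (if r = c then (if c \<in> {n+1..n+i} \<and> d \<in> {1..i} then T p q c d * pr_lgamma n i (Emat p q) a b else 0) else 0)"
        using assms by (simp add: sum.delta')
      finally show ?thesis .
    qed
    have "(\<Sum>r\<in>{1..2*n}. \<Sum>s\<in>{1..2*n}. T p q r s * pr_lgamma n i (Emat p q) a b * pr_zn n i (Emat r s) c d)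
       = (\<Sum>r\<in>{1..2*n}. if r = c then (if c \<in> {n+1..n+i} \<and> d \<in> {1..i} then T p q c d * pr_lgamma n i (Emat p q) a b else 0) else 0)"
      by (simp only: in2)
    also have "\<dots> = (if c \<in> {n+1..n+i} \<and> d \<in> {1..i} then T p q c d * pr_lgamma n i (Emat p q) a b else 0)"
      using assms by (simp add: sum.delta')
    finally show ?thesis .
  qed
  have sub: "{1..i} \<subseteq> {1..2*n}" using assms by auto
  have "pr_tens n i T a b c d = (\<Sum>p\<in>{1..2*n}. \<Sum>q\<in>{1..2*n}.
      if c \<in> {n+1..n+i} \<and> d \<in> {1..i} then T p q c d * pr_lgamma n i (Emat p q) a b else 0)"
    unfolding pr_tens_def by (simp only: inner)
  also have "\<dots> = (\<Sum>p\<in>{1..i}. \<Sum>q\<in>{1..i}.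
      if c \<in> {n+1..n+i} \<and> d \<in> {1..i} then T p q c d * pr_lgamma n i (Emat p q) a b else 0)"
  proof -
    have "(\<Sum>q\<in>{1..2*n}. if c \<in> {n+1..n+i} \<and> d \<in> {1..i} then T p q c d * pr_lgamma n i (Emat p q) a b else 0)
       = (\<Sum>q\<in>{1..i}. if c \<in> {n+1..n+i} \<and> d \<in> {1..i} then T p q c d * pr_lgamma n i (Emat p q) a b else 0)" for p
      by (rule sum.mono_neutral_right) (use sub in \<open>auto simp: prl_E\<close>)
    then have "(\<Sum>p\<in>{1..2*n}. \<Sum>q\<in>{1..2*n}. if c \<in> {n+1..n+i} \<and> d \<in> {1..i} then T p q c d * pr_lgamma n i (Emat p q) a b else 0)
      = (\<Sum>p\<in>{1..2*n}. \<Sum>q\<in>{1..i}. if c \<in> {n+1..n+i} \<and> d \<in> {1..i} then T p q c d * pr_lgamma n i (Emat p q) a b else 0)"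
      by simp
    also have "\<dots> = (\<Sum>p\<in>{1..i}. \<Sum>q\<in>{1..i}. if c \<in> {n+1..n+i} \<and> d \<in> {1..i} then T p q c d * pr_lgamma n i (Emat p q) a b else 0)"
      by (rule sum.mono_neutral_right) (use sub in \<open>auto simp: prl_E intro!: sum.neutral\<close>)
    finally show ?thesis .
  qed
  finally show ?thesis by auto
qed


lemma H12_val:
  assumes "2 \<le> n"
  shows "H12 n a b = Hdiag n 1 a b - Hdiag n 2 a b"
proof -
  have m1: "mmul n (Xdiff n 1 2) (Xdiff n 2 1) a b = Emat 1 1 a b + Emat (2+n) (2+n) a b"
    unfolding mmul_def Xdiff_def hat_def
    by (simp only: left_diff_distrib sum_subtractf sumE_l) (use assms in \<open>auto simp: Emat_def\<close>)
  have m2: "mmul n (Xdiff n 2 1) (Xdiff n 1 2) a b = Emat 2 2 a b + Emat (1+n) (1+n) a b"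
    unfolding mmul_def Xdiff_def hat_def
    by (simp only: left_diff_distrib sum_subtractf sumE_l) (use assms in \<open>auto simp: Emat_def\<close>)
  show ?thesis unfolding H12_def bracket_def m1 m2 Hdiag_def hat_def by (simp add: add.commute)
qed


lemma alg:
  fixes C J N1 N2 N12 D12 D21 H1 H2 m S1 S2 :: complex
  assumes "C \<noteq> 0"
  shows "C*C*8*J * ((1/2)*(N1/C * D12 - N12/(2*C)*(H1-m)) + ((1/2)*(N12/(2*C)*(H2 - m) - N2/C*D21) + (S1 - S2)/(4*C)))
    = 4*C*J * (D12*N1) - 4*C*J*(D21*N2) + 2*C*J*S1 - 2*C*J*S2 - 2*C*J*((H1-H2)*N12)"
proof -
  have "C * ((1/2)*(N1/C * D12 - N12/(2*C)*(H1-m)) + ((1/2)*(N12/(2*C)*(H2 - m) - N2/C*D21) + (S1 - S2)/(4*C)))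
     = (1/2)*(N1 * D12 - N12/2*(H1-m)) + ((1/2)*(N12/2*(H2 - m) - N2*D21) + (S1 - S2)/4)"
    using assms by (simp add: field_simps)
  moreover have "\<And>X. C*C*8*J*X = C*8*J*(C*X)" by (simp add: ac_simps)
  ultimately have "C*C*8*J * ((1/2)*(N1/C * D12 - N12/(2*C)*(H1-m)) + ((1/2)*(N12/(2*C)*(H2 - m) - N2/C*D21) + (S1 - S2)/(4*C)))
     = C*8*J*((1/2)*(N1 * D12 - N12/2*(H1-m)) + ((1/2)*(N12/2*(H2 - m) - N2*D21) + (S1 - S2)/4))"
    by simp
  also have "\<dots> = 4*C*J * (D12*N1) - 4*C*J*(D21*N2) + 2*C*J*S1 - 2*C*J*S2 - 2*C*J*((H1-H2)*N12)"
    by (simp add: field_simps)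
  finally show ?thesis .
qed

theorem lemma5p5:
  fixes n i :: nat and c0 :: real
  assumes "n \<ge> 3" and "2 \<le> i" and "i \<le> n - 1" and "c0 > 0"
  shows "(\<lambda>a b c d. complex_of_real (8 * c0^2 / (real i + 1)) *
            pr_tens n i (tau2_bar n i c0 (\<lambda>r s. Xnegsum n 1 (i+1) r s + Xdiff n (i+1) 2 r s)) a b c d)
       = (\<lambda>a b c d.
            complex_of_real (4 * c0 / (real i + 1)) * tens (Xdiff n 1 2) (Xnegtwo n 1) a b c d
          - complex_of_real (4 * c0 / (real i + 1)) * tens (Xdiff n 2 1) (Xnegtwo n 2) a b c d
          + complex_of_real (2 * c0 / (real i + 1)) * (\<Sum>k\<in>{3..i}. tens (Xdiff n k 2) (Xnegsum n 1 k) a b c d)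
          - complex_of_real (2 * c0 / (real i + 1)) * (\<Sum>k\<in>{3..i}. tens (Xdiff n k 1) (Xnegsum n 2 k) a b c d)
          - complex_of_real (2 * c0 / (real i + 1)) * tens (H12 n) (Xnegsum n 1 2) a b c d)"
proof (intro ext)
  fix a b c d
  let ?Y = "\<lambda>r s. Xnegsum n 1 (i+1) r s + Xdiff n (i+1) 2 r s"
  let ?T = "tau2_bar n i c0 ?Y"
  let ?w = "omega_bar n i c0"
  let ?PL = "\<lambda>p q. pr_lgamma n i (Emat p q) a b"
  have i1: "i + 1 \<le> n" "1 \<le> i" "i \<le> n" "2 \<le> n" "2 \<le> i" using assms by auto
  have c0: "complex_of_real c0 \<noteq> 0" using assms by simp
  show "complex_of_real (8 * c0^2 / (real i + 1)) * pr_tens n i ?T a b c d =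
            complex_of_real (4 * c0 / (real i + 1)) * tens (Xdiff n 1 2) (Xnegtwo n 1) a b c d
          - complex_of_real (4 * c0 / (real i + 1)) * tens (Xdiff n 2 1) (Xnegtwo n 2) a b c d
          + complex_of_real (2 * c0 / (real i + 1)) * (\<Sum>k\<in>{3..i}. tens (Xdiff n k 2) (Xnegsum n 1 k) a b c d)
          - complex_of_real (2 * c0 / (real i + 1)) * (\<Sum>k\<in>{3..i}. tens (Xdiff n k 1) (Xnegsum n 2 k) a b c d)
          - complex_of_real (2 * c0 / (real i + 1)) * tens (H12 n) (Xnegsum n 1 2) a b c d"
  proof (cases "c \<in> {n+1..n+i} \<and> d \<in> {1..i}")
    case False
    have z1: "Xnegtwo n 1 c d = 0" "Xnegtwo n 2 c d = 0" "Xnegsum n 1 2 c d = 0"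
      using False i1 by (auto simp: Xnegtwo_def Xnegsum_def Emat_def hat_def)
    have z2: "(\<Sum>k\<in>{3..i}. tens (Xdiff n k 2) (Xnegsum n 1 k) a b c d) = 0"
             "(\<Sum>k\<in>{3..i}. tens (Xdiff n k 1) (Xnegsum n 2 k) a b c d) = 0"
      using False i1 by (auto simp: tens_def Xnegsum_def Emat_def hat_def intro!: sum.neutral)
    have "pr_tens n i ?T a b c d = 0"
      by (simp only: prtens_collapse[OF i1(3)] if_not_P[OF False])
    then show ?thesis using z1 z2 by (simp add: tens_def)
  next
    case True
    have Tv: "?T p q c d = (1/2) * ((if q = 2 then ?w p (1+n) c d else 0) - (if q = 1 then ?w p (2+n) c d else 0))"
      if "p \<le> i" "q \<le> i" for p q
      unfolding tau2_bar_def using ad2[OF i1(1,2) that] by simp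
    have Sq: "(\<Sum>q\<in>{1..i}. ?T p q c d * ?PL p q)
       = (1/2) * (?w p (1+n) c d * ?PL p 2 - ?w p (2+n) c d * ?PL p 1)" if "p \<le> i" for p
    proof -
      have "(\<Sum>q\<in>{1..i}. ?T p q c d * ?PL p q)
        = (\<Sum>q\<in>{1..i}. (if q = 2 then (1/2) * (?w p (1+n) c d * ?PL p 2) else 0)
                       - (if q = 1 then (1/2) * (?w p (2+n) c d * ?PL p 1) else 0))"
      proof (rule sum.cong[OF refl])
        fix q assume q: "q \<in> {1..i}"
        show "?T p q c d * ?PL p q = (if q = 2 then (1/2) * (?w p (1+n) c d * ?PL p 2) else 0)
                       - (if q = 1 then (1/2) * (?w p (2+n) c d * ?PL p 1) else 0)"
          using q unfolding Tv[OF that, of q, OF conjunct2[OF q[simplified]]] by auto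
      qed
      also have "\<dots> = (1/2) * (?w p (1+n) c d * ?PL p 2 - ?w p (2+n) c d * ?PL p 1)"
        using i1 by (simp add: sum_subtractf sum.delta algebra_simps)
      finally show ?thesis .
    qed
    define m where "m = (\<Sum>l\<in>{1..i}. Hdiag n l a b) / of_nat i"
    have PL: "?PL 1 2 = Xdiff n 1 2 a b" "?PL 2 1 = Xdiff n 2 1 a b"
       "?PL 1 1 = Hdiag n 1 a b - m" "?PL 2 2 = Hdiag n 2 a b - m"
      using i1 by (simp_all add: prl_E m_def)
    have W: "?w 1 (1+n) c d = Xnegtwo n 1 c d / complex_of_real c0"
      "?w 2 (2+n) c d = Xnegtwo n 2 c d / complex_of_real c0"
      "?w 1 (2+n) c d = Xnegsum n 1 2 c d / (2 * complex_of_real c0)"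
      "?w 2 (1+n) c d = Xnegsum n 1 2 c d / (2 * complex_of_real c0)"
      using omega_val[of 1 i 1 n c0 c d] omega_val[of 2 i 2 n c0 c d]
            omega_val[of 1 i 2 n c0 c d] omega_val[of 2 i 1 n c0 c d] i1 by simp_all
    have S3: "(\<Sum>p\<in>{3..i}. (1/2) * (?w p (1+n) c d * ?PL p 2 - ?w p (2+n) c d * ?PL p 1))
       = ((\<Sum>k\<in>{3..i}. Xdiff n k 2 a b * Xnegsum n 1 k c d) - (\<Sum>k\<in>{3..i}. Xdiff n k 1 a b * Xnegsum n 2 k c d))
          / (4 * complex_of_real c0)"
    proof -
      have "(\<Sum>p\<in>{3..i}. (1/2) * (?w p (1+n) c d * ?PL p 2 - ?w p (2+n) c d * ?PL p 1))
        = (\<Sum>p\<in>{3..i}. Xdiff n p 2 a b * Xnegsum n 1 p c d / (4 * complex_of_real c0)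
                       - Xdiff n p 1 a b * Xnegsum n 2 p c d / (4 * complex_of_real c0))"
      proof (rule sum.cong[OF refl])
        fix p assume p: "p \<in> {3..i}"
        have w: "?w p (1+n) c d = Xnegsum n 1 p c d / (2 * complex_of_real c0)"
             "?w p (2+n) c d = Xnegsum n 2 p c d / (2 * complex_of_real c0)"
          using omega_val[of p i 1 n c0 c d] omega_val[of p i 2 n c0 c d] p by simp_all
        have pl: "?PL p 2 = Xdiff n p 2 a b" "?PL p 1 = Xdiff n p 1 a b"
          using p by (simp_all add: prl_E)
        show "(1/2) * (?w p (1+n) c d * ?PL p 2 - ?w p (2+n) c d * ?PL p 1)
           = Xdiff n p 2 a b * Xnegsum n 1 p c d / (4 * complex_of_real c0)
                       - Xdiff n p 1 a b * Xnegsum n 2 p c d / (4 * complex_of_real c0)"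
          unfolding w pl using c0 by (simp add: field_simps)
      qed
      also have "\<dots> = ((\<Sum>k\<in>{3..i}. Xdiff n k 2 a b * Xnegsum n 1 k c d) - (\<Sum>k\<in>{3..i}. Xdiff n k 1 a b * Xnegsum n 2 k c d))
          / (4 * complex_of_real c0)"
        by (simp only: sum_subtractf sum_divide_distrib diff_divide_distrib)
      finally show ?thesis .
    qed
    have split: "{1..i} = insert 1 (insert 2 {3..i})" using i1 by auto
    have L: "pr_tens n i ?T a b c d =
        (1/2) * (?w 1 (1+n) c d * ?PL 1 2 - ?w 1 (2+n) c d * ?PL 1 1)
      + ((1/2) * (?w 2 (1+n) c d * ?PL 2 2 - ?w 2 (2+n) c d * ?PL 2 1)
      + (\<Sum>p\<in>{3..i}. (1/2) * (?w p (1+n) c d * ?PL p 2 - ?w p (2+n) c d * ?PL p 1)))"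
    proof -
      have "pr_tens n i ?T a b c d = (\<Sum>p\<in>{1..i}. \<Sum>q\<in>{1..i}. ?T p q c d * ?PL p q)"
        by (simp only: prtens_collapse[OF i1(3)] if_P[OF True])
      also have "\<dots> = (\<Sum>p\<in>{1..i}. (1/2) * (?w p (1+n) c d * ?PL p 2 - ?w p (2+n) c d * ?PL p 1))"
        by (rule sum.cong[OF refl], rule Sq, simp)
      also have "\<dots> = (1/2) * (?w 1 (1+n) c d * ?PL 1 2 - ?w 1 (2+n) c d * ?PL 1 1)
      + ((1/2) * (?w 2 (1+n) c d * ?PL 2 2 - ?w 2 (2+n) c d * ?PL 2 1)
      + (\<Sum>p\<in>{3..i}. (1/2) * (?w p (1+n) c d * ?PL p 2 - ?w p (2+n) c d * ?PL p 1)))"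
        by (simp only: split, subst sum.insert, simp, simp, subst sum.insert, simp_all)
      finally show ?thesis .
    qed
    have e: "complex_of_real (8 * c0^2 / (real i + 1)) = complex_of_real c0 * complex_of_real c0 * 8 * inverse (of_nat i + 1)"
      "complex_of_real (4 * c0 / (real i + 1)) = 4 * complex_of_real c0 * inverse (of_nat i + 1)"
      "complex_of_real (2 * c0 / (real i + 1)) = 2 * complex_of_real c0 * inverse (of_nat i + 1)"
      by (simp_all add: power2_eq_square divide_inverse)
    have ip: "(of_nat i + 1 :: complex) \<noteq> 0"
      by (metis of_nat_Suc of_nat_eq_0_iff add.commute nat.distinct(1) one_add_one add_Suc_right Suc_eq_plus1)
    show ?thesis
      unfolding L S3 W PL H12_val[OF i1(4)] tens_def e
      by (rule alg[OF c0])
  qed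
qed

end
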